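(* Let $(\varphi_n\colon n\in\mathbb{N})$ be a quotient-convergent sequence of increasing submodular setfunctions, each defined on some set-algebra. Then there exists an increasing submodular setfunction $\varphi\colon\mathcal{B}(C)\to\mathbb{R}$, defined on the Borel subsets of the Cantor set $C$, such that $\varphi_n\rightarrowtail\varphi$.
   Context: A set-algebra $(J,\mathcal{B})$ is a family of subsets of $J$ containing $\emptyset$ and closed under complement and finite union. A setfunction on it is a map $\varphi\colon\mathcal{B}\to\mathbb{R}$ with $\varphi(\emptyset)=0$; it is increasing if $X\subseteq Y$ implies $\varphi(X)\le\varphi(Y)$, and submodular if $\varphi(X)+\varphi(Y)\ge\varphi(X\cap Y)+\varphi(X\cup Y)$ for all $X,Y\in\mathcal{B}$. For $k\in\mathbb{N}$ and a map $F\colon J\to[k]$ with $F^{-1}(i)\in\mathcal{B}$ for all $i$, the quotient $\varphi\circ F^{-1}$ is the setfunction $A\mapsto\varphi(F^{-1}(A))$ on $2^{[k]}$, and $Q_k(\varphi)\subseteq\mathbb{R}^{2^k}$ is the set of all such quotients. A sequence $(\varphi_n)$ is quotient-convergent if for every $k$ the sets $Q_k(\varphi_n)$ form a Cauchy sequence in the Hausdorff distance on $\mathbb{R}^{2^k}$; it quotient-converges to $\varphi$, written $\varphi_n\rightarrowtail\varphi$, if for every $k$ the Hausdorff distance between $Q_k(\varphi_n)$ and $Q_k(\varphi)$ tends to $0$. *)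

theory Defs
  imports "HOL-Analysis.Analysis"
begin

text \<open>A setfunction on (J,B) is phi restricted to B, with phi of the empty set = 0.\<close>

definition setfunction :: "'a set \<Rightarrow> 'a set set \<Rightarrow> ('a set \<Rightarrow> real) \<Rightarrow> bool" where
  "setfunction J B phi \<longleftrightarrow> algebra J B \<and> phi {} = 0"

definition increasing_sf :: "'a set set \<Rightarrow> ('a set \<Rightarrow> real) \<Rightarrow> bool" where
  "increasing_sf B phi \<longleftrightarrow> (\<forall>X\<in>B. \<forall>Y\<in>B. X \<subseteq> Y \<longrightarrow> phi X \<le> phi Y)"

definition submodular_sf :: "'a set set \<Rightarrow> ('a set \<Rightarrow> real) \<Rightarrow> bool" where
  "submodular_sf B phi \<longleftrightarrow>
     (\<forall>X\<in>B. \<forall>Y\<in>B. phi X + phi Y \<ge> phi (X \<inter> Y) + phi (X \<union> Y))"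

text \<open>[k] is rendered as {..<k}. A quotient phi o F^-1 is a setfunction on 2^[k],
  represented as a function on nat sets which is 0 outside Pow {..<k}
  (so it is a point of R^(2^k)).\<close>

definition quotient_sf :: "nat \<Rightarrow> 'a set \<Rightarrow> ('a set \<Rightarrow> real) \<Rightarrow> ('a \<Rightarrow> nat) \<Rightarrow> (nat set \<Rightarrow> real)" where
  "quotient_sf k J phi F = (\<lambda>A. if A \<subseteq> {..<k} then phi {x\<in>J. F x \<in> A} else 0)"

definition Q :: "nat \<Rightarrow> 'a set \<Rightarrow> 'a set set \<Rightarrow> ('a set \<Rightarrow> real) \<Rightarrow> (nat set \<Rightarrow> real) set" where
  "Q k J B phi = {quotient_sf k J phi F | F.
      F \<in> J \<rightarrow> {..<k} \<and> (\<forall>i<k. {x\<in>J. F x = i} \<in> B)}"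

definition dist_k :: "nat \<Rightarrow> (nat set \<Rightarrow> real) \<Rightarrow> (nat set \<Rightarrow> real) \<Rightarrow> real" where
  "dist_k k f g = Max ((\<lambda>A. \<bar>f A - g A\<bar>) ` Pow {..<k})"

definition hausdorff_k :: "nat \<Rightarrow> (nat set \<Rightarrow> real) set \<Rightarrow> (nat set \<Rightarrow> real) set \<Rightarrow> real" where
  "hausdorff_k k S T = max (SUP f\<in>S. INF g\<in>T. dist_k k f g) (SUP g\<in>T. INF f\<in>S. dist_k k f g)"

definition quotient_convergent ::
  "(nat \<Rightarrow> 'a set) \<Rightarrow> (nat \<Rightarrow> 'a set set) \<Rightarrow> (nat \<Rightarrow> 'a set \<Rightarrow> real) \<Rightarrow> bool" where
  "quotient_convergent J B phi \<longleftrightarrow>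
     (\<forall>k\<ge>1. \<forall>e>0. \<exists>N. \<forall>m\<ge>N. \<forall>n\<ge>N.
        hausdorff_k k (Q k (J m) (B m) (phi m)) (Q k (J n) (B n) (phi n)) < e)"

definition quotient_converges_to ::
  "(nat \<Rightarrow> 'a set) \<Rightarrow> (nat \<Rightarrow> 'a set set) \<Rightarrow> (nat \<Rightarrow> 'a set \<Rightarrow> real) \<Rightarrow>
   'b set \<Rightarrow> 'b set set \<Rightarrow> ('b set \<Rightarrow> real) \<Rightarrow> bool" where
  "quotient_converges_to J B phi J' B' psi \<longleftrightarrow>
     (\<forall>k\<ge>1. (\<lambda>n. hausdorff_k k (Q k (J n) (B n) (phi n)) (Q k J' B' psi)) \<longlonglongrightarrow> 0)"

definition cantor_set :: "real set" where
  "cantor_set = range (\<lambda>b::nat \<Rightarrow> bool. \<Sum>i. (if b i then 2 else 0) / 3 ^ Suc i)"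

definition cantor_borel :: "real set set" where
  "cantor_borel = sets (restrict_space borel cantor_set)"

end

theory Submission
  imports Defs
begin

lemma alg_fin_all:
  assumes "algebra \<Omega> M" "finite I" "\<forall>i\<in>I. {x\<in>\<Omega>. Pr i x} \<in> M"
  shows "{x\<in>\<Omega>. \<forall>i\<in>I. Pr i x} \<in> M"
  using assms(2,3)
proof (induction I rule: finite_induct)
  case empty
  interpret algebra \<Omega> M by fact
  show ?case by simp
next
  case (insert a I)
  have eq: "{x\<in>\<Omega>. \<forall>i\<in>insert a I. Pr i x} = {x\<in>\<Omega>. Pr a x} \<inter> {x\<in>\<Omega>. \<forall>i\<in>I. Pr i x}" by auto
  interpret algebra \<Omega> M by fact
  have "{x\<in>\<Omega>. Pr a x} \<inter> {x\<in>\<Omega>. \<forall>i\<in>I. Pr i x} \<in> M" using insert by (intro Int) auto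
  then show ?case using eq by simp
qed

lemma alg_fin_ex:
  assumes "algebra \<Omega> M" "finite I" "\<forall>i\<in>I. {x\<in>\<Omega>. Pr i x} \<in> M"
  shows "{x\<in>\<Omega>. \<exists>i\<in>I. Pr i x} \<in> M"
  using assms(2,3)
proof (induction I rule: finite_induct)
  case empty
  interpret algebra \<Omega> M by fact
  show ?case by simp
next
  case (insert a I)
  have eq: "{x\<in>\<Omega>. \<exists>i\<in>insert a I. Pr i x} = {x\<in>\<Omega>. Pr a x} \<union> {x\<in>\<Omega>. \<exists>i\<in>I. Pr i x}" by auto
  interpret algebra \<Omega> M by fact
  have "{x\<in>\<Omega>. Pr a x} \<union> {x\<in>\<Omega>. \<exists>i\<in>I. Pr i x} \<in> M" using insert by (intro Un) auto
  then show ?case using eq by simp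
qed

lemma dist_k_ge:
  assumes "A \<subseteq> {..<k}" shows "\<bar>f A - g A\<bar> \<le> dist_k k f g"
  unfolding dist_k_def using assms by (intro Max_ge) auto

lemma dist_k_le:
  assumes "\<And>A. A \<subseteq> {..<k} \<Longrightarrow> \<bar>f A - g A\<bar> \<le> c" shows "dist_k k f g \<le> c"
  unfolding dist_k_def using assms by (subst Max_le_iff) auto

lemma dist_k_lt:
  assumes "\<And>A. A \<subseteq> {..<k} \<Longrightarrow> \<bar>f A - g A\<bar> < c" shows "dist_k k f g < c"
  unfolding dist_k_def using assms by (subst Max_less_iff) auto

lemma dist_k_nonneg: "0 \<le> dist_k k f g"
  using dist_k_ge[of "{}" k f g] by simp

lemma dist_k_sym: "dist_k k f g = dist_k k g f"
  unfolding dist_k_def by (simp add: abs_minus_commute)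

lemma dist_k_tri: "dist_k k f h \<le> dist_k k f g + dist_k k g h"
proof (rule dist_k_le)
  fix A assume "A \<subseteq> {..<k}"
  then have "\<bar>f A - g A\<bar> \<le> dist_k k f g" "\<bar>g A - h A\<bar> \<le> dist_k k g h" by (auto intro: dist_k_ge)
  then show "\<bar>f A - h A\<bar> \<le> dist_k k f g + dist_k k g h" by linarith
qed

lemma dist_k_bound:
  assumes "\<And>A. 0 \<le> f A \<and> f A \<le> c" "\<And>A. 0 \<le> g A \<and> g A \<le> c"
  shows "dist_k k f g \<le> c"
proof (rule dist_k_le)
  fix A show "\<bar>f A - g A\<bar> \<le> c" using assms[of A] by linarith
qed

definition bndset :: "real \<Rightarrow> (nat set \<Rightarrow> real) set \<Rightarrow> bool" where
  "bndset c S \<longleftrightarrow> (\<forall>f\<in>S. \<forall>A. 0 \<le> f A \<and> f A \<le> c)"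

lemma haus_parts:
  assumes "S \<noteq> {}" "T \<noteq> {}" "bndset c S" "bndset c T"
  shows "bdd_above ((\<lambda>f. INF g\<in>T. dist_k k f g) ` S)"
    and "bdd_above ((\<lambda>g. INF f\<in>S. dist_k k f g) ` T)"
    and "\<And>f. bdd_below ((\<lambda>g. dist_k k f g) ` T)"
    and "\<And>g. bdd_below ((\<lambda>f. dist_k k f g) ` S)"
proof -
  obtain g0 where g0: "g0 \<in> T" using assms by auto
  obtain f0 where f0: "f0 \<in> S" using assms by auto
  show "\<And>f. bdd_below ((\<lambda>g. dist_k k f g) ` T)" "\<And>g. bdd_below ((\<lambda>f. dist_k k f g) ` S)"
    using dist_k_nonneg by (auto intro!: bdd_belowI)
  show "bdd_above ((\<lambda>f. INF g\<in>T. dist_k k f g) ` S)"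
  proof (rule bdd_aboveI2)
    fix f assume "f \<in> S"
    have "(INF g\<in>T. dist_k k f g) \<le> dist_k k f g0"
      using g0 dist_k_nonneg by (intro cINF_lower) (auto intro!: bdd_belowI)
    also have "\<dots> \<le> c" using assms(3,4) \<open>f\<in>S\<close> g0 unfolding bndset_def by (intro dist_k_bound) auto
    finally show "(INF g\<in>T. dist_k k f g) \<le> c" .
  qed
  show "bdd_above ((\<lambda>g. INF f\<in>S. dist_k k f g) ` T)"
  proof (rule bdd_aboveI2)
    fix g assume "g \<in> T"
    have "(INF f\<in>S. dist_k k f g) \<le> dist_k k f0 g"
      using f0 dist_k_nonneg by (intro cINF_lower) (auto intro!: bdd_belowI)
    also have "\<dots> \<le> c" using assms(3,4) \<open>g\<in>T\<close> f0 unfolding bndset_def by (intro dist_k_bound) auto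
    finally show "(INF f\<in>S. dist_k k f g) \<le> c" .
  qed
qed

lemma haus_lt:
  assumes "S \<noteq> {}" "T \<noteq> {}" "bndset c S" "bndset c T" "hausdorff_k k S T < e"
  shows "\<forall>f\<in>S. \<exists>g\<in>T. dist_k k f g < e" and "\<forall>g\<in>T. \<exists>f\<in>S. dist_k k f g < e"
proof -
  note hp = haus_parts[OF assms(1-4), of k]
  show "\<forall>f\<in>S. \<exists>g\<in>T. dist_k k f g < e"
  proof
    fix f assume f: "f \<in> S"
    have "(INF g\<in>T. dist_k k f g) \<le> (SUP f\<in>S. INF g\<in>T. dist_k k f g)"
      using f hp(1) by (intro cSUP_upper)
    also have "\<dots> \<le> hausdorff_k k S T" unfolding hausdorff_k_def by simp
    finally have "(INF g\<in>T. dist_k k f g) < e" using assms(5) by linarith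
    then show "\<exists>g\<in>T. dist_k k f g < e" using assms(2) by (simp add: cINF_less_iff hp(3))
  qed
  show "\<forall>g\<in>T. \<exists>f\<in>S. dist_k k f g < e"
  proof
    fix g assume g: "g \<in> T"
    have "(INF f\<in>S. dist_k k f g) \<le> (SUP g\<in>T. INF f\<in>S. dist_k k f g)"
      using g hp(2) by (intro cSUP_upper)
    also have "\<dots> \<le> hausdorff_k k S T" unfolding hausdorff_k_def by simp
    finally have "(INF f\<in>S. dist_k k f g) < e" using assms(5) by linarith
    then show "\<exists>f\<in>S. dist_k k f g < e" using assms(1) by (simp add: cINF_less_iff hp(4))
  qed
qed

lemma haus_le:
  assumes "S \<noteq> {}" "T \<noteq> {}" "bndset c S" "bndset c T"
    and "\<And>f d. f \<in> S \<Longrightarrow> d > 0 \<Longrightarrow> \<exists>g\<in>T. dist_k k f g < e + d"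
    and "\<And>g d. g \<in> T \<Longrightarrow> d > 0 \<Longrightarrow> \<exists>f\<in>S. dist_k k f g < e + d"
  shows "hausdorff_k k S T \<le> e"
proof -
  note hp = haus_parts[OF assms(1-4), of k]
  have 1: "(SUP f\<in>S. INF g\<in>T. dist_k k f g) \<le> e"
  proof (rule cSUP_least[OF assms(1)])
    fix f assume f: "f \<in> S"
    show "(INF g\<in>T. dist_k k f g) \<le> e"
    proof (rule field_le_epsilon)
      fix d :: real assume "d > 0"
      then obtain g where "g \<in> T" "dist_k k f g < e + d" using assms(5)[OF f] by blast
      then show "(INF g\<in>T. dist_k k f g) \<le> e + d"
        using hp(3) by (meson cINF_lower less_imp_le order_trans)
    qed
  qed
  have 2: "(SUP g\<in>T. INF f\<in>S. dist_k k f g) \<le> e"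
  proof (rule cSUP_least[OF assms(2)])
    fix g assume g: "g \<in> T"
    show "(INF f\<in>S. dist_k k f g) \<le> e"
    proof (rule field_le_epsilon)
      fix d :: real assume "d > 0"
      then obtain f where "f \<in> S" "dist_k k f g < e + d" using assms(6)[OF g] by blast
      then show "(INF f\<in>S. dist_k k f g) \<le> e + d"
        using hp(4) by (meson cINF_lower less_imp_le order_trans)
    qed
  qed
  show ?thesis using 1 2 unfolding hausdorff_k_def by simp
qed

lemma haus_nonneg:
  assumes "S \<noteq> {}" "T \<noteq> {}" "bndset c S" "bndset c T"
  shows "0 \<le> hausdorff_k k S T"
proof -
  note hp = haus_parts[OF assms(1-4), of k]
  obtain f where f: "f \<in> S" using assms by auto
  have "0 \<le> (INF g\<in>T. dist_k k f g)" using assms(2) dist_k_nonneg by (intro cINF_greatest) auto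
  also have "\<dots> \<le> (SUP f\<in>S. INF g\<in>T. dist_k k f g)" using f hp(1) by (intro cSUP_upper)
  also have "\<dots> \<le> hausdorff_k k S T" unfolding hausdorff_k_def by simp
  finally show ?thesis .
qed

lemma cluster:
  fixes s :: "nat \<Rightarrow> 'b \<Rightarrow> real"
  assumes "\<And>m Y. 0 \<le> s m Y \<and> s m Y \<le> c"
  shows "\<exists>x. (\<forall>Y. 0 \<le> x Y \<and> x Y \<le> c) \<and>
     (\<forall>S. finite S \<longrightarrow> (\<forall>d>0. \<forall>M0. \<exists>m\<ge>M0. \<forall>Y\<in>S. \<bar>s m Y - x Y\<bar> < d))"
proof -
  define K where "K = PiE UNIV (\<lambda>_::'b. {0..c::real})"
  have "compactin (product_topology (\<lambda>_. euclidean) UNIV) K"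
    unfolding K_def by (subst compactin_PiE) auto
  then have cK: "compact K" by (simp add: euclidean_product_topology compactin_euclidean_iff)
  have sK: "s m \<in> K" for m using assms unfolding K_def by auto
  define F where "F = filtermap s sequentially"
  have "F \<noteq> bot" unfolding F_def by (simp add: filtermap_bot_iff)
  moreover have "eventually (\<lambda>x. x \<in> K) F" unfolding F_def eventually_filtermap using sK by simp
  ultimately obtain x where xK: "x \<in> K" and nb: "inf (nhds x) F \<noteq> bot"
    using cK unfolding compact_filter by blast
  have "\<exists>m\<ge>M0. \<forall>Y\<in>S. \<bar>s m Y - x Y\<bar> < d" if S: "finite S" and d: "d > 0" for S d M0
  proof (rule ccontr)
    assume neg: "\<not> ?thesis"
    define P where "P = (\<lambda>f::'b \<Rightarrow> real. \<forall>Y\<in>S. \<bar>f Y - x Y\<bar> < d)"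
    have ev1: "eventually (\<lambda>f. \<bar>f Y - x Y\<bar> < d) (nhds x)" for Y
    proof -
      have "open ((\<lambda>f::'b \<Rightarrow> real. f Y) -` ball (x Y) d)"
        by (rule open_vimage) (auto intro: continuous_on_product_coordinates)
      moreover have "x \<in> (\<lambda>f::'b \<Rightarrow> real. f Y) -` ball (x Y) d" using d by simp
      ultimately show ?thesis unfolding eventually_nhds
        by (intro exI[of _ "(\<lambda>f::'b \<Rightarrow> real. f Y) -` ball (x Y) d"]) (auto simp: dist_real_def abs_minus_commute)
    qed
    have evP: "eventually P (nhds x)" unfolding P_def using S ev1 by (intro eventually_ball_finite) auto
    have evN: "eventually (\<lambda>f. \<not> P f) F"
      unfolding F_def eventually_filtermap eventually_sequentially P_def using neg by auto
    have "eventually (\<lambda>_. False) (inf (nhds x) F)"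
      unfolding eventually_inf using evP evN by blast
    then show False using nb by (simp add: eventually_False)
  qed
  moreover have "\<forall>Y. 0 \<le> x Y \<and> x Y \<le> c" using xK unfolding K_def by auto
  ultimately show ?thesis by blast
qed

definition pt :: "nat list \<Rightarrow> real" where "pt c = 2 / 3 ^ Suc (to_nat c)"

lemma pt_in: "pt c \<in> cantor_set"
proof -
  let ?j = "to_nat c"
  have "(\<lambda>i. (if (\<lambda>i. i = ?j) i then 2 else 0) / 3 ^ Suc i :: real) = (\<lambda>i. if i = ?j then 2 / 3 ^ Suc i else 0)"
    by auto
  moreover have "(\<lambda>i. if i = ?j then 2 / 3 ^ Suc i else 0 :: real) sums (2 / 3 ^ Suc ?j)"
    by (rule sums_single)
  ultimately have eq: "(\<Sum>i. (if (\<lambda>i. i = ?j) i then 2 else 0) / 3 ^ Suc i :: real) = pt c"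
    unfolding pt_def by (simp add: sums_iff)
  show ?thesis unfolding cantor_set_def by (rule range_eqI[where x="\<lambda>i. i = to_nat c"]) (use eq in simp)
qed

lemma pt_inj: "inj pt"
proof (rule injI)
  fix a b assume "pt a = pt b"
  then have "(3::real) ^ Suc (to_nat a) = 3 ^ Suc (to_nat b)" unfolding pt_def by (simp add: field_simps)
  then have "to_nat a = to_nat b" by simp
  then show "a = b" by (simp add: inj_eq inj_to_nat)
qed

lemma cantor_alg: "algebra cantor_set cantor_borel"
proof -
  have "sigma_algebra (space (restrict_space borel cantor_set)) (sets (restrict_space borel cantor_set))"
    by (rule sets.sigma_algebra_axioms)
  then show ?thesis unfolding cantor_borel_def by (simp add: space_restrict_space sigma_algebra.axioms(1))
qed

lemma countable_borel: "countable (X::real set) \<Longrightarrow> X \<in> sets borel"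
  by (rule sets.countable) (auto intro: borel_closed)

lemma cantor_borel_memI: "Y \<in> sets borel \<Longrightarrow> cantor_set \<inter> Y \<in> cantor_borel"
  unfolding cantor_borel_def sets_restrict_space by auto

lemma cantor_fiber:
  fixes G :: "nat list \<Rightarrow> nat"
  defines "F \<equiv> (\<lambda>x. if x \<in> range pt then G (inv pt x) else 0)"
  shows "F (pt c) = G c" and "{x\<in>cantor_set. F x = i} \<in> cantor_borel"
proof -
  show "F (pt c) = G c" unfolding F_def using pt_inj by simp
  have eq: "{x\<in>cantor_set. F x = i} = cantor_set \<inter> (pt ` {c. G c = i} \<union> (if i = 0 then - range pt else {}))"
  proof (rule set_eqI, rule iffI)
    fix x assume x: "x \<in> {x\<in>cantor_set. F x = i}"
    show "x \<in> cantor_set \<inter> (pt ` {c. G c = i} \<union> (if i = 0 then - range pt else {}))"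
    proof (cases "x \<in> range pt")
      case True
      then obtain c where c: "x = pt c" by blast
      then have "F x = G c" unfolding F_def using pt_inj by simp
      then show ?thesis using x c by auto
    next
      case False
      then show ?thesis using x unfolding F_def by auto
    qed
  next
    fix x assume x: "x \<in> cantor_set \<inter> (pt ` {c. G c = i} \<union> (if i = 0 then - range pt else {}))"
    show "x \<in> {x\<in>cantor_set. F x = i}"
    proof (cases "x \<in> range pt")
      case True
      then obtain c where c: "x = pt c" by blast
      then have "F x = G c" unfolding F_def using pt_inj by simp
      moreover have "G c = i" using x c pt_inj by (auto simp: inj_eq split: if_splits)
      ultimately show ?thesis using x by auto
    next
      case False
      then show ?thesis using x unfolding F_def by (auto split: if_splits)
    qed
  qed
  have "countable (pt ` {c. G c = i})" by simp
  then have "pt ` {c. G c = i} \<in> sets borel" by (rule countable_borel)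
  moreover have "- range pt \<in> sets borel" using countable_borel[of "range pt"] by (simp add: borel_comp)
  ultimately have "pt ` {c. G c = i} \<union> (if i = 0 then - range pt else {}) \<in> sets borel" by auto
  then show "{x\<in>cantor_set. F x = i} \<in> cantor_borel" unfolding eq by (rule cantor_borel_memI)
qed


lemma sf_bnd:
  assumes "setfunction J B phi" "increasing_sf B phi" "X \<in> B"
  shows "0 \<le> phi X \<and> phi X \<le> phi J"
proof -
  interpret algebra J B using assms(1) unfolding setfunction_def by auto
  have "phi {} \<le> phi X" using assms(2,3) unfolding increasing_sf_def by auto
  moreover have "phi X \<le> phi J" using assms(2,3) sets_into_space[OF assms(3)] unfolding increasing_sf_def by auto
  ultimately show ?thesis using assms(1) unfolding setfunction_def by auto
qed

lemma fiber_in: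
  fixes k :: nat
  assumes "algebra J B" "F \<in> J \<rightarrow> {..<k}" "\<forall>i<k. {x\<in>J. F x = i} \<in> B"
  shows "{x\<in>J. F x \<in> A} \<in> B"
proof -
  have "{x\<in>J. F x \<in> A} = {x\<in>J. \<exists>i\<in>A \<inter> {..<k}. F x = i}" using assms(2) by auto
  moreover have fin: "finite (A \<inter> {..<k})" by (rule finite_subset[of _ "{..<k}"]) auto
  moreover have "{x\<in>J. \<exists>i\<in>A \<inter> {..<k}. F x = i} \<in> B"
    using assms(3) fin by (intro alg_fin_ex[OF assms(1)]) auto
  ultimately show ?thesis by simp
qed

lemma Q_bnd:
  assumes "setfunction J B phi" "increasing_sf B phi"
  shows "bndset (phi J) (Q k J B phi)"
  unfolding bndset_def Q_def
proof (clarify)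
  fix A F assume F: "F \<in> J \<rightarrow> {..<k}" "\<forall>i<k. {x \<in> J. F x = i} \<in> B"
  have alg: "algebra J B" using assms(1) unfolding setfunction_def by auto
  have "{x\<in>J. F x \<in> A} \<in> B" by (rule fiber_in[OF alg F])
  from sf_bnd[OF assms this] have "0 \<le> phi {x\<in>J. F x \<in> A} \<and> phi {x\<in>J. F x \<in> A} \<le> phi J" .
  moreover have "0 \<le> phi J" using sf_bnd[OF assms algebra.top[OF alg]] by simp
  ultimately show "0 \<le> quotient_sf k J phi F A \<and> quotient_sf k J phi F A \<le> phi J"
    unfolding quotient_sf_def by auto
qed

lemma Q_ne:
  assumes "setfunction J B phi" "1 \<le> k"
  shows "Q k J B phi \<noteq> {}"
proof -
  have alg: "algebra J B" using assms(1) unfolding setfunction_def by auto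
  have "(\<lambda>_. 0) \<in> J \<rightarrow> {..<k}" using assms(2) by auto
  moreover have "\<forall>i<k. {x\<in>J. (0::nat) = i} \<in> B"
  proof (intro allI impI)
    fix i assume "i < k"
    show "{x\<in>J. (0::nat) = i} \<in> B"
    proof (cases "i = 0")
      case True then show ?thesis using algebra.top[OF alg] by simp
    next
      case False
      interpret algebra J B by (rule alg)
      show ?thesis using False by simp
    qed
  qed
  ultimately have "quotient_sf k J phi (\<lambda>_. 0) \<in> Q k J B phi" unfolding Q_def by blast
  then show ?thesis by auto
qed

lemma bndset_mono: "bndset c S \<Longrightarrow> c \<le> c' \<Longrightarrow> bndset c' S"
  unfolding bndset_def by (meson order_trans)



theorem theorem3p1:
  fixes J :: "nat \<Rightarrow> 'a set" and B :: "nat \<Rightarrow> 'a set set" and phi :: "nat \<Rightarrow> 'a set \<Rightarrow> real"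
  assumes "\<And>n. setfunction (J n) (B n) (phi n)"
    and "\<And>n. increasing_sf (B n) (phi n)"
    and "\<And>n. submodular_sf (B n) (phi n)"
    and "quotient_convergent J B phi"
  shows "\<exists>psi :: real set \<Rightarrow> real.
           setfunction cantor_set cantor_borel psi \<and>
           increasing_sf cantor_borel psi \<and> submodular_sf cantor_borel psi \<and>
           quotient_converges_to J B phi cantor_set cantor_borel psi"
proof -
  note sf = assms(1) and inc = assms(2) and sm = assms(3) and qc = assms(4)[unfolded quotient_convergent_def]
  have alg: "algebra (J n) (B n)" and ph0: "phi n {} = 0" for n using sf unfolding setfunction_def by auto
  define Mx where "Mx n = phi n (J n)" for n
  have Mx0: "0 \<le> Mx n" for n using sf_bnd[OF sf inc algebra.top[OF alg]] unfolding Mx_def by simp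
  have QbM: "bndset (Mx n) (Q k (J n) (B n) (phi n))" for k n unfolding Mx_def by (rule Q_bnd[OF sf inc])
  obtain N1 where N1: "\<And>m n. m \<ge> N1 \<Longrightarrow> n \<ge> N1 \<Longrightarrow>
      hausdorff_k 1 (Q 1 (J m) (B m) (phi m)) (Q 1 (J n) (B n) (phi n)) < 1"
    using qc by (metis le_refl zero_less_one)
  have Mx_N1: "Mx n \<le> Mx N1 + 1" if "n \<ge> N1" for n
  proof -
    let ?v = "quotient_sf 1 (J N1) (phi N1) (\<lambda>_. 0)"
    have "(\<lambda>_. 0::nat) \<in> J N1 \<rightarrow> {..<1}" by auto
    moreover have "\<forall>i<1. {x\<in>J N1. (0::nat) = i} \<in> B N1" using algebra.top[OF alg] by simp
    ultimately have v: "?v \<in> Q 1 (J N1) (B N1) (phi N1)" unfolding Q_def by blast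
    have "\<forall>f\<in>Q 1 (J N1) (B N1) (phi N1). \<exists>g\<in>Q 1 (J n) (B n) (phi n). dist_k 1 f g < 1"
      by (rule haus_lt(1)[OF Q_ne[OF sf] Q_ne[OF sf] bndset_mono[OF QbM, where c'="Mx N1 + Mx n"] bndset_mono[OF QbM, where c'="Mx N1 + Mx n"] N1[OF le_refl that]])
        (use Mx0 in auto)
    with v obtain g where g: "g \<in> Q 1 (J n) (B n) (phi n)" "dist_k 1 ?v g < 1" by blast
    then obtain F where F: "F \<in> J n \<rightarrow> {..<1}" "g = quotient_sf 1 (J n) (phi n) F" unfolding Q_def by blast
    have "{x\<in>J n. F x \<in> {0}} = J n" using F(1) by auto
    then have "g {0} = Mx n" unfolding F(2) quotient_sf_def Mx_def by simp
    moreover have "?v {0} = Mx N1" unfolding quotient_sf_def Mx_def by simp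
    moreover have "\<bar>?v {0} - g {0}\<bar> \<le> dist_k 1 ?v g" by (rule dist_k_ge) auto
    ultimately show ?thesis using g(2) by linarith
  qed
  define Mb where "Mb = (\<Sum>i\<le>N1. Mx i) + 1"
  have MxMb: "Mx n \<le> Mb" for n
  proof (cases "n \<le> N1")
    case True
    then have "Mx n \<le> (\<Sum>i\<le>N1. Mx i)" using Mx0 by (intro member_le_sum) auto
    then show ?thesis unfolding Mb_def by simp
  next
    case False
    have "Mx N1 \<le> (\<Sum>i\<le>N1. Mx i)" using Mx0 by (intro member_le_sum) auto
    then show ?thesis using Mx_N1[of n] False unfolding Mb_def by simp
  qed
  have QbMb: "bndset Mb (Q k (J n) (B n) (phi n))" for k n by (rule bndset_mono[OF QbM MxMb])
  define T where "T = (SIGMA k:{1::nat..}. PiE (Pow {..<k}) (\<lambda>_. UNIV :: rat set))"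
  have cT: "countable T" unfolding T_def
    by (intro countable_SIGMA countable_PiE) auto
  have "(1, restrict (\<lambda>_. 0) (Pow {..<1})) \<in> T" unfolding T_def by auto
  then have neT: "T \<noteq> {}" by auto
  define tg where "tg = from_nat_into T"
  define kt where "kt t = fst (tg t)" for t
  define vt where "vt t = (\<lambda>A. if A \<subseteq> {..<kt t} then real_of_rat (snd (tg t) A) else 0)" for t
  have tgT: "tg t \<in> T" for t unfolding tg_def by (rule from_nat_into[OF neT])
  have kt1: "1 \<le> kt t" for t using tgT[of t] unfolding kt_def T_def by auto
  define Phi where "Phi m t F \<longleftrightarrow> F \<in> J m \<rightarrow> {..<kt t} \<and> (\<forall>i<kt t. {x\<in>J m. F x = i} \<in> B m) \<and>
      dist_k (kt t) (quotient_sf (kt t) (J m) (phi m) F) (vt t)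
        < (INF q\<in>Q (kt t) (J m) (B m) (phi m). dist_k (kt t) q (vt t)) + 1 / (real m + 1)" for m t F
  have exF: "\<exists>F. Phi m t F" for m t
  proof -
    have ne: "Q (kt t) (J m) (B m) (phi m) \<noteq> {}" by (rule Q_ne[OF sf kt1])
    have "(INF q\<in>Q (kt t) (J m) (B m) (phi m). dist_k (kt t) q (vt t))
        < (INF q\<in>Q (kt t) (J m) (B m) (phi m). dist_k (kt t) q (vt t)) + 1 / (real m + 1)" by simp
    then obtain q where q: "q \<in> Q (kt t) (J m) (B m) (phi m)"
      "dist_k (kt t) q (vt t) < (INF q\<in>Q (kt t) (J m) (B m) (phi m). dist_k (kt t) q (vt t)) + 1 / (real m + 1)"
      using ne dist_k_nonneg by (subst (asm) cINF_less_iff) (auto intro!: bdd_belowI)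
    then show ?thesis unfolding Q_def Phi_def by blast
  qed
  define P where "P m t = (SOME F. Phi m t F)" for m t
  have PP: "Phi m t (P m t)" for m t unfolding P_def by (rule someI_ex[OF exF])
  have P: "\<And>m t. P m t \<in> J m \<rightarrow> {..<kt t}"
     "\<And>m t. \<forall>i<kt t. {x\<in>J m. P m t x = i} \<in> B m"
     "\<And>m t. dist_k (kt t) (quotient_sf (kt t) (J m) (phi m) (P m t)) (vt t)
        < (INF q\<in>Q (kt t) (J m) (B m) (phi m). dist_k (kt t) q (vt t)) + 1 / (real m + 1)"
    using PP unfolding Phi_def by auto
  have Pfib: "{x\<in>J m. P m t x = i} \<in> B m" for m t i
  proof (cases "i < kt t")
    case True then show ?thesis using P(2) by auto
  next
    case False
    then have eq: "{x\<in>J m. P m t x = i} = {}" using P(1)[of m t] by fastforce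
    have "{} \<in> B m" using alg[of m] by (simp add: algebra_def ring_of_sets_iff)
    then show ?thesis by (simp only: eq)
  qed
  define h where "h m x = map (\<lambda>t. P m t x) [0..<m]" for m x
  define Gt where "Gt t c = (if t < length c \<and> c ! t < kt t then c ! t else 0)" for t and c :: "nat list"
  define ph' where "ph' m Y = phi m {x\<in>J m. h m x \<in> Y}" for m Y
  have hfib: "{x\<in>J m. h m x \<in> Y} \<in> B m" for m Y
  proof -
    define Km where "Km = (\<Sum>t<m. kt t)"
    define R where "R = {c. set c \<subseteq> {..<Km} \<and> length c = m}"
    have finR: "finite R" unfolding R_def by (rule finite_lists_length_eq) auto
    have hR: "h m x \<in> R" if "x \<in> J m" for x
    proof -
      have "P m t x < Km" if "t < m" for t
      proof -
        have "P m t x < kt t" using P(1)[of m t] \<open>x \<in> J m\<close> by auto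
        also have "kt t \<le> Km" unfolding Km_def using that by (intro member_le_sum) auto
        finally show ?thesis .
      qed
      then show ?thesis unfolding R_def h_def by auto
    qed
    have "{x\<in>J m. h m x \<in> Y} = {x\<in>J m. \<exists>c\<in>Y \<inter> R. \<forall>t\<in>{..<m}. P m t x = c ! t}"
    proof (rule set_eqI, rule iffI)
      fix x assume x: "x \<in> {x\<in>J m. h m x \<in> Y}"
      then show "x \<in> {x\<in>J m. \<exists>c\<in>Y \<inter> R. \<forall>t\<in>{..<m}. P m t x = c ! t}"
        using hR[of x] by (auto intro!: bexI[of _ "h m x"] simp: h_def)
    next
      fix x assume x: "x \<in> {x\<in>J m. \<exists>c\<in>Y \<inter> R. \<forall>t\<in>{..<m}. P m t x = c ! t}"
      then obtain c where c: "c \<in> Y" "c \<in> R" "\<forall>t\<in>{..<m}. P m t x = c ! t" "x \<in> J m" by blast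
      have "h m x = c" unfolding h_def using c(2,3) unfolding R_def by (intro nth_equalityI) auto
      then show "x \<in> {x\<in>J m. h m x \<in> Y}" using c by auto
    qed
    moreover have "{x\<in>J m. \<exists>c\<in>Y \<inter> R. \<forall>t\<in>{..<m}. P m t x = c ! t} \<in> B m"
      using finR by (intro alg_fin_ex[OF alg] ballI alg_fin_all[OF alg]) (auto simp: Pfib)
    ultimately show ?thesis by simp
  qed
  have ph'b: "0 \<le> ph' m Y \<and> ph' m Y \<le> Mb" for m Y
    using sf_bnd[OF sf inc hfib[of m Y]] MxMb[of m] unfolding ph'_def Mx_def by auto
  have ph'0: "ph' m {} = 0" for m unfolding ph'_def using ph0 by simp
  have ph'mono: "ph' m Y \<le> ph' m Y'" if "Y \<subseteq> Y'" for m Y Y'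
  proof -
    have "{x\<in>J m. h m x \<in> Y} \<subseteq> {x\<in>J m. h m x \<in> Y'}" using that by auto
    moreover have "\<forall>X\<in>B m. \<forall>Z\<in>B m. X \<subseteq> Z \<longrightarrow> phi m X \<le> phi m Z" using inc[of m] unfolding increasing_sf_def .
    ultimately show ?thesis unfolding ph'_def using hfib[of m Y] hfib[of m Y'] by simp
  qed
  have ph'sub: "ph' m (Y \<inter> Y') + ph' m (Y \<union> Y') \<le> ph' m Y + ph' m Y'" for m Y Y'
  proof -
    have "{x\<in>J m. h m x \<in> Y \<inter> Y'} = {x\<in>J m. h m x \<in> Y} \<inter> {x\<in>J m. h m x \<in> Y'}"
      "{x\<in>J m. h m x \<in> Y \<union> Y'} = {x\<in>J m. h m x \<in> Y} \<union> {x\<in>J m. h m x \<in> Y'}" by auto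
    moreover have "\<forall>X\<in>B m. \<forall>Z\<in>B m. phi m X + phi m Z \<ge> phi m (X \<inter> Z) + phi m (X \<union> Z)"
      using sm[of m] unfolding submodular_sf_def .
    ultimately show ?thesis unfolding ph'_def using hfib[of m Y] hfib[of m Y'] by simp
  qed
  have "\<exists>x. (\<forall>Y. 0 \<le> x Y \<and> x Y \<le> Mb) \<and>
     (\<forall>S. finite S \<longrightarrow> (\<forall>d>0. \<forall>M0. \<exists>m\<ge>M0. \<forall>Y\<in>S. \<bar>ph' m Y - x Y\<bar> < d))"
    by (rule cluster) (rule ph'b)
  then obtain ps where psb: "\<And>Y. 0 \<le> ps Y \<and> ps Y \<le> Mb"
    and cl0: "\<forall>S. finite S \<longrightarrow> (\<forall>d>0. \<forall>M0. \<exists>m\<ge>M0. \<forall>Y\<in>S. \<bar>ph' m Y - ps Y\<bar> < d)"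
    by auto
  have cl: "\<exists>m\<ge>M0. \<forall>Y\<in>S. \<bar>ph' m Y - ps Y\<bar> < d" if "finite S" "d > 0" for S d M0
    using cl0 that by simp
  have ps0: "ps {} = 0"
  proof (rule ccontr)
    assume "ps {} \<noteq> 0"
    then obtain m where "\<bar>ph' m {} - ps {}\<bar> < \<bar>ps {}\<bar>" using cl[of "{{}}" "\<bar>ps {}\<bar>" 0] by auto
    then show False using ph'0[of m] by simp
  qed
  have psmono: "ps Y \<le> ps Y'" if "Y \<subseteq> Y'" for Y Y'
  proof (rule ccontr)
    assume neg: "\<not> ?thesis"
    define g where "g = ps Y - ps Y'"
    have g: "g > 0" using neg unfolding g_def by simp
    then obtain m where "\<forall>Z\<in>{Y, Y'}. \<bar>ph' m Z - ps Z\<bar> < g / 2"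
      using cl[of "{Y, Y'}" "g / 2" 0] by auto
    then have "\<bar>ph' m Y - ps Y\<bar> * 2 < g" "\<bar>ph' m Y' - ps Y'\<bar> * 2 < g" by auto
    then show False using ph'mono[OF that, of m] g_def by (smt (verit))
  qed
  have pssub: "ps (Y \<inter> Y') + ps (Y \<union> Y') \<le> ps Y + ps Y'" for Y Y'
  proof (rule ccontr)
    assume neg: "\<not> ?thesis"
    define g where "g = ps (Y \<inter> Y') + ps (Y \<union> Y') - ps Y - ps Y'"
    have g: "g > 0" using neg unfolding g_def by simp
    then obtain m where "\<forall>Z\<in>{Y, Y', Y \<inter> Y', Y \<union> Y'}. \<bar>ph' m Z - ps Z\<bar> < g / 4"
      using cl[of "{Y, Y', Y \<inter> Y', Y \<union> Y'}" "g / 4" 0] by auto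
    then have "\<bar>ph' m Y - ps Y\<bar> * 4 < g" "\<bar>ph' m Y' - ps Y'\<bar> * 4 < g"
       "\<bar>ph' m (Y \<inter> Y') - ps (Y \<inter> Y')\<bar> * 4 < g" "\<bar>ph' m (Y \<union> Y') - ps (Y \<union> Y')\<bar> * 4 < g" by auto
    then show False using ph'sub[of m Y Y'] g_def by (smt (verit))
  qed
  define psi where "psi X = ps {c. pt c \<in> X}" for X
  define Qs where "Qs k = {quotient_sf k UNIV ps G | G. G \<in> UNIV \<rightarrow> {..<k}}" for k
  have QE: "Q k cantor_set cantor_borel psi = Qs k" for k
  proof (rule set_eqI, rule iffI)
    fix q assume "q \<in> Q k cantor_set cantor_borel psi"
    then obtain F where F: "F \<in> cantor_set \<rightarrow> {..<k}" "q = quotient_sf k cantor_set psi F"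
      unfolding Q_def by blast
    have "F \<circ> pt \<in> UNIV \<rightarrow> {..<k}" using F(1) pt_in by auto
    moreover have "q = quotient_sf k UNIV ps (F \<circ> pt)"
    proof -
      show ?thesis unfolding F(2) quotient_sf_def psi_def by (intro ext) (simp add: pt_in comp_def)
    qed
    ultimately show "q \<in> Qs k" unfolding Qs_def by blast
  next
    fix q assume "q \<in> Qs k"
    then obtain G where G: "G \<in> UNIV \<rightarrow> {..<k}" "q = quotient_sf k UNIV ps G" unfolding Qs_def by blast
    define F where "F = (\<lambda>x. if x \<in> range pt then G (inv pt x) else 0)"
    have Fpt: "F (pt c) = G c" for c unfolding F_def by (rule cantor_fiber(1))
    have Ffib: "{x\<in>cantor_set. F x = i} \<in> cantor_borel" for i unfolding F_def by (rule cantor_fiber(2))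
    have "0 < k" using G(1) by fastforce
    then have "F \<in> cantor_set \<rightarrow> {..<k}" using G(1) unfolding F_def by auto
    moreover have "q = quotient_sf k cantor_set psi F"
    proof -
      show ?thesis unfolding G(2) quotient_sf_def psi_def by (intro ext) (simp add: pt_in Fpt)
    qed
    ultimately show "q \<in> Q k cantor_set cantor_borel psi" unfolding Q_def using Ffib by blast
  qed
  have Qsb: "bndset Mb (Qs k)" for k
    unfolding bndset_def Qs_def quotient_sf_def using psb Mx0[of 0] MxMb[of 0] by auto
  have Qsne: "Qs k \<noteq> {}" if "1 \<le> k" for k
  proof -
    have "(\<lambda>_. 0) \<in> (UNIV::nat list set) \<rightarrow> {..<k}" using that by auto
    then show ?thesis unfolding Qs_def by blast
  qed
  have qm_in: "quotient_sf k (J m) (phi m) (\<lambda>x. G (h m x)) \<in> Q k (J m) (B m) (phi m)"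
    if "G \<in> UNIV \<rightarrow> {..<k}" for G k m
  proof -
    have "(\<lambda>x. G (h m x)) \<in> J m \<rightarrow> {..<k}" using that by auto
    moreover have "\<forall>i<k. {x\<in>J m. G (h m x) = i} \<in> B m" using hfib[of m "{c. G c = _}"] by simp
    ultimately show ?thesis unfolding Q_def by blast
  qed
  have qm_close: "\<exists>m\<ge>MM. dist_k k (quotient_sf k (J m) (phi m) (\<lambda>x. G (h m x))) (quotient_sf k UNIV ps G) < d"
    if "d > 0" for G k d MM
  proof -
    have "finite ((\<lambda>A. {c. G c \<in> A}) ` Pow {..<k})" by simp
    from cl[OF this that, of MM] obtain m where m: "m \<ge> MM"
      "\<forall>Y\<in>(\<lambda>A. {c. G c \<in> A}) ` Pow {..<k}. \<bar>ph' m Y - ps Y\<bar> < d" by blast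
    have "dist_k k (quotient_sf k (J m) (phi m) (\<lambda>x. G (h m x))) (quotient_sf k UNIV ps G) < d"
    proof (rule dist_k_lt)
      fix A assume A: "A \<subseteq> {..<k}"
      then have "\<bar>ph' m {c. G c \<in> A} - ps {c. G c \<in> A}\<bar> < d" using m(2) by auto
      then show "\<bar>quotient_sf k (J m) (phi m) (\<lambda>x. G (h m x)) A - quotient_sf k UNIV ps G A\<bar> < d"
        using A unfolding quotient_sf_def ph'_def by simp
    qed
    then show ?thesis using m(1) by blast
  qed
  have main: "(\<lambda>n. hausdorff_k k (Q k (J n) (B n) (phi n)) (Qs k)) \<longlonglongrightarrow> 0" if k1: "1 \<le> k" for k
  proof (rule LIMSEQ_I)
    fix r :: real assume r: "0 < r"
    define \<epsilon> where "\<epsilon> = r / 4"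
    have \<epsilon>: "\<epsilon> > 0" using r unfolding \<epsilon>_def by simp
    obtain N where N: "\<And>m n. m \<ge> N \<Longrightarrow> n \<ge> N \<Longrightarrow>
        hausdorff_k k (Q k (J m) (B m) (phi m)) (Q k (J n) (B n) (phi n)) < \<epsilon>"
      using qc k1 \<epsilon> by metis
    have hb: "hausdorff_k k (Q k (J n) (B n) (phi n)) (Qs k) \<le> 3 * \<epsilon>" if n: "n \<ge> N" for n
    proof (rule haus_le[OF Q_ne[OF sf k1] Qsne[OF k1] QbMb Qsb])
      fix f d assume f: "f \<in> Q k (J n) (B n) (phi n)" and d: "0 < (d::real)"
      have "\<forall>A. \<exists>r. A \<subseteq> {..<k} \<longrightarrow> \<bar>f A - real_of_rat r\<bar> < \<epsilon>"
      proof
        fix A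
        obtain x where x: "x \<in> \<rat>" "f A - \<epsilon> < x" "x < f A + \<epsilon>"
          using Rats_dense_in_real[of "f A - \<epsilon>" "f A + \<epsilon>"] \<epsilon> by auto
        then obtain r where "x = real_of_rat r" by (auto elim: Rats_cases)
        then show "\<exists>r. A \<subseteq> {..<k} \<longrightarrow> \<bar>f A - real_of_rat r\<bar> < \<epsilon>" using x by (intro exI[of _ r]) auto
      qed
      then obtain w where w: "\<And>A. A \<subseteq> {..<k} \<Longrightarrow> \<bar>f A - real_of_rat (w A)\<bar> < \<epsilon>" by metis
      define w' where "w' = restrict w (Pow {..<k})"
      have "(k, w') \<in> T" unfolding T_def w'_def using k1 by auto
      then obtain t where t: "tg t = (k, w')" unfolding tg_def using from_nat_into_surj[OF cT] by metis
      have ktt: "kt t = k" unfolding kt_def t by simp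
      have vtt: "vt t A = (if A \<subseteq> {..<k} then real_of_rat (w A) else 0)" for A
        unfolding vt_def ktt unfolding t w'_def by simp
      have dfv: "dist_k k f (vt t) < \<epsilon>" by (rule dist_k_lt) (simp add: vtt w)
      obtain M0 where M0: "inverse (real (Suc M0)) < d / 2" using reals_Archimedean[of "d/2"] d by auto
      have GtU: "Gt t \<in> UNIV \<rightarrow> {..<k}" unfolding Gt_def ktt using k1 by auto
      obtain m where m: "m \<ge> max (max N (Suc t)) M0"
        "dist_k k (quotient_sf k (J m) (phi m) (\<lambda>x. Gt t (h m x))) (quotient_sf k UNIV ps (Gt t)) < d / 2"
        using qm_close[where G="Gt t" and k=k and d="d/2" and MM="max (max N (Suc t)) M0"] d by auto
      have hx: "Gt t (h m x) = P m t x" if "x \<in> J m" for x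
      proof -
        have "t < m" using m(1) by auto
        moreover have "P m t x < kt t" using P(1)[of m t] that by auto
        ultimately show ?thesis unfolding Gt_def h_def by simp
      qed
      have seteq: "{x\<in>J m. Gt t (h m x) \<in> A} = {x\<in>J m. P m t x \<in> A}" for A using hx by auto
      have eqP: "quotient_sf k (J m) (phi m) (\<lambda>x. Gt t (h m x)) = quotient_sf k (J m) (phi m) (P m t)"
        unfolding quotient_sf_def by (intro ext) (simp add: seteq)
      obtain q0 where q0: "q0 \<in> Q k (J m) (B m) (phi m)" "dist_k k f q0 < \<epsilon>"
        using haus_lt(1)[OF Q_ne[OF sf k1] Q_ne[OF sf k1] QbMb QbMb N[OF n, of m]] m(1) f by auto
      have "dist_k k q0 (vt t) \<le> dist_k k q0 f + dist_k k f (vt t)" by (rule dist_k_tri)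
      also have "\<dots> < 2 * \<epsilon>" using q0(2) dfv dist_k_sym[of k q0 f] by simp
      finally have q0v: "dist_k k q0 (vt t) < 2 * \<epsilon>" .
      have "(INF q\<in>Q k (J m) (B m) (phi m). dist_k k q (vt t)) \<le> dist_k k q0 (vt t)"
        using q0(1) dist_k_nonneg by (intro cINF_lower) (auto intro!: bdd_belowI)
      with q0v have inf2: "(INF q\<in>Q k (J m) (B m) (phi m). dist_k k q (vt t)) < 2 * \<epsilon>" by simp
      have "1 / (real m + 1) \<le> 1 / (real M0 + 1)" using m(1) by (intro divide_left_mono) auto
      also have "\<dots> < d / 2" using M0 by (simp add: inverse_eq_divide add.commute)
      finally have md: "1 / (real m + 1) < d / 2" .
      have Pd: "dist_k k (quotient_sf k (J m) (phi m) (P m t)) (vt t) < 2 * \<epsilon> + d / 2"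
        using P(3)[where m=m and t=t, unfolded ktt] inf2 md by simp
      define g where "g = quotient_sf k UNIV ps (Gt t)"
      have gQ: "g \<in> Qs k" unfolding g_def Qs_def using GtU by blast
      have "dist_k k f g \<le> dist_k k f (vt t) + dist_k k (vt t) g" by (rule dist_k_tri)
      also have "dist_k k (vt t) g \<le> dist_k k (vt t) (quotient_sf k (J m) (phi m) (P m t))
           + dist_k k (quotient_sf k (J m) (phi m) (P m t)) g" by (rule dist_k_tri)
      finally have "dist_k k f g \<le> dist_k k f (vt t) + dist_k k (quotient_sf k (J m) (phi m) (P m t)) (vt t)
           + dist_k k (quotient_sf k (J m) (phi m) (P m t)) g"
        using dist_k_sym[of k "vt t"] by simp
      moreover have "dist_k k (quotient_sf k (J m) (phi m) (P m t)) g < d / 2"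
        using m(2) unfolding eqP g_def .
      ultimately have "dist_k k f g < 3 * \<epsilon> + d" using dfv Pd by simp
      then show "\<exists>g\<in>Qs k. dist_k k f g < 3 * \<epsilon> + d" using gQ by blast
    next
      fix g d assume g: "g \<in> Qs k" and d: "0 < (d::real)"
      then obtain G where G: "G \<in> UNIV \<rightarrow> {..<k}" "g = quotient_sf k UNIV ps G" unfolding Qs_def by blast
      obtain m where m: "m \<ge> N" "dist_k k (quotient_sf k (J m) (phi m) (\<lambda>x. G (h m x))) g < d"
        using qm_close[where G=G and k=k and d=d and MM=N, OF d] G(2) by auto
      have qin: "quotient_sf k (J m) (phi m) (\<lambda>x. G (h m x)) \<in> Q k (J m) (B m) (phi m)" by (rule qm_in[OF G(1)])
      obtain f where f: "f \<in> Q k (J n) (B n) (phi n)" "dist_k k (quotient_sf k (J m) (phi m) (\<lambda>x. G (h m x))) f < \<epsilon>"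
        using haus_lt(1)[OF Q_ne[OF sf k1] Q_ne[OF sf k1] QbMb QbMb N[OF m(1) n]] qin by auto
      have "dist_k k f g \<le> dist_k k f (quotient_sf k (J m) (phi m) (\<lambda>x. G (h m x))) + dist_k k (quotient_sf k (J m) (phi m) (\<lambda>x. G (h m x))) g"
        by (rule dist_k_tri)
      then have "dist_k k f g < \<epsilon> + d" using f(2) m(2) dist_k_sym[of k f] by simp
      then show "\<exists>f\<in>Q k (J n) (B n) (phi n). dist_k k f g < 3 * \<epsilon> + d" using f(1) \<epsilon> by (intro bexI[of _ f]) auto
    qed
    have "norm (hausdorff_k k (Q k (J n) (B n) (phi n)) (Qs k) - 0) < r" if "n \<ge> N" for n
    proof -
      have "0 \<le> hausdorff_k k (Q k (J n) (B n) (phi n)) (Qs k)"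
        by (rule haus_nonneg[OF Q_ne[OF sf k1] Qsne[OF k1] QbMb Qsb])
      then show ?thesis using hb[OF that] \<epsilon> unfolding \<epsilon>_def by simp
    qed
    then show "\<exists>no. \<forall>n\<ge>no. norm (hausdorff_k k (Q k (J n) (B n) (phi n)) (Qs k) - 0) < r" by blast
  qed
  show ?thesis
  proof (intro exI[of _ psi] conjI)
    show "setfunction cantor_set cantor_borel psi" unfolding setfunction_def psi_def using cantor_alg ps0 by simp
    show "increasing_sf cantor_borel psi" unfolding increasing_sf_def psi_def by (intro ballI impI psmono) auto
    show "submodular_sf cantor_borel psi" unfolding submodular_sf_def psi_def
    proof (intro ballI)
      fix X Y :: "real set"
      have e1: "{c. pt c \<in> X \<inter> Y} = {c. pt c \<in> X} \<inter> {c. pt c \<in> Y}" and e2: "{c. pt c \<in> X \<union> Y} = {c. pt c \<in> X} \<union> {c. pt c \<in> Y}" by auto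
      show "ps {c. pt c \<in> X \<inter> Y} + ps {c. pt c \<in> X \<union> Y} \<le> ps {c. pt c \<in> X} + ps {c. pt c \<in> Y}"
        unfolding e1 e2 by (rule pssub)
    qed
    show "quotient_converges_to J B phi cantor_set cantor_borel psi"
      unfolding quotient_converges_to_def QE using main by blast
  qed
qed

end
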